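(* Let $n\geq 3$ and let $M$ be an indecomposable regular $\mathcal{K}_n$-module of quasi-length $r+1\geq 2$ with quasi-top $X$, i.e. $M=[r+1]X$. Then: (1) $\underline{\dim}\,M=(m,m)$ for some $m$ if and only if $\underline{\dim}\,X=b\,(B_{2r-1},B_{2r+1})$ for some positive integer $b$; in this case $m=bA_{r+1}$. (2) $\underline{\dim}\,M=((n-1)m,m)$ for some $m$ if and only if $\underline{\dim}\,X=b\,(B_{2r-3},B_{2r-1})$ when $r\geq 2$, respectively $\underline{\dim}\,X=(b,b)$ when $r=1$, for some positive integer $b$; in this case $m=bA_{r+1}$.
   Context: $\mathcal{K}_n$ is the quiver with vertices $1,2$ and $n$ arrows $2\to1$; modules are finite-dimensional representations over an algebraically closed field, dimension vectors are $(\dim M_2,\dim M_1)$, and $\underline{\dim}\,\tau M=(\underline{\dim}\,M)\Phi$ with $\Phi=\begin{pmatrix} n^2-1 & n\\ -n & -1\end{pmatrix}$ ($\tau$ the Auslander–Reiten translation). Each indecomposable regular module $M$ admits a unique chain of irreducible epimorphisms $M=[r]X\to[r-1]X\to\cdots\to[1]X=X$ with $X$ quasi-simple; $X$ is the quasi-top and $r$ the quasi-length of $M$, and $\underline{\dim}\,[r]X=\sum_{i=0}^{r-1}\underline{\dim}\,\tau^iX$. The integers $A_i$ are defined by $A_0=0$, $A_1=1$, $A_{i+2}=nA_{i+1}-A_i$, and $B_j$ by $B_{2i}=A_i$ and $B_{2i+1}=A_{i+1}-A_i$ for $i\geq 0$ (so $B_0=0,B_1=1,B_2=1,B_3=n-1,B_4=n,\dots$).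 *)

theory Defs
  imports Main
begin

text \<open>Dimension vectors of K_n-modules are pairs (dim M_2, dim M_1) of integers.
  The Coxeter transformation acts on row vectors: dim (tau M) = (dim M) Phi with
  Phi = [[n^2-1, n], [-n, -1]], and its inverse Phi^-1 = [[-1, -n], [n, n^2-1]].\<close>

definition Phi :: "nat \<Rightarrow> int \<times> int \<Rightarrow> int \<times> int" where
  "Phi n v = (fst v * (int n ^ 2 - 1) - int n * snd v, int n * fst v - snd v)"

definition Phi_inv :: "nat \<Rightarrow> int \<times> int \<Rightarrow> int \<times> int" where
  "Phi_inv n v = (- fst v + int n * snd v, - int n * fst v + (int n ^ 2 - 1) * snd v)"

definition dim_tau :: "nat \<Rightarrow> nat \<Rightarrow> int \<times> int \<Rightarrow> int \<times> int" where
  "dim_tau n i x = (Phi n ^^ i) x"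

definition dim_tau_inv :: "nat \<Rightarrow> nat \<Rightarrow> int \<times> int \<Rightarrow> int \<times> int" where
  "dim_tau_inv n i x = (Phi_inv n ^^ i) x"

text \<open>dim [r]X = sum_{i=0}^{r-1} dim tau^i X.\<close>
definition dim_ql :: "nat \<Rightarrow> nat \<Rightarrow> int \<times> int \<Rightarrow> int \<times> int" where
  "dim_ql n r x = (\<Sum>i<r. fst (dim_tau n i x), \<Sum>i<r. snd (dim_tau n i x))"

definition nonneg_vec :: "int \<times> int \<Rightarrow> bool" where
  "nonneg_vec v \<longleftrightarrow> fst v \<ge> 0 \<and> snd v \<ge> 0"

text \<open>Necessary conditions satisfied by the dimension vector x of a quasi-simple
  regular K_n-module X: x is nonzero and every dim tau^i X (i in Z) is a
  dimension vector, i.e. nonnegative (regular modules are never annihilated by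
  powers of tau or tau^-1).\<close>
definition regular_dim :: "nat \<Rightarrow> int \<times> int \<Rightarrow> bool" where
  "regular_dim n x \<longleftrightarrow> x \<noteq> (0, 0) \<and>
     (\<forall>i. nonneg_vec (dim_tau n i x)) \<and> (\<forall>i. nonneg_vec (dim_tau_inv n i x))"

fun A :: "nat \<Rightarrow> nat \<Rightarrow> int" where
  "A n 0 = 0"
| "A n (Suc 0) = 1"
| "A n (Suc (Suc i)) = int n * A n (Suc i) - A n i"

definition B :: "nat \<Rightarrow> nat \<Rightarrow> int" where
  "B n j = (if even j then A n (j div 2) else A n (j div 2 + 1) - A n (j div 2))"

end

theory Submission
  imports Defs
begin

fun U :: "nat \<Rightarrow> int \<Rightarrow> int \<Rightarrow> nat \<Rightarrow> int" where
  "U n p q 0 = q"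
| "U n p q (Suc 0) = p"
| "U n p q (Suc (Suc k)) = int n * U n p q (Suc k) - U n p q k"

lemma phi_pow: "(Phi n ^^ i) (p,q) = (U n p q (2*i+1), U n p q (2*i))"
proof (induction i)
  case 0 then show ?case by simp
next
  case (Suc i)
  have e1: "U n p q (2*Suc i) = int n * U n p q (2*i+1) - U n p q (2*i)"
    by (simp add: numeral_2_eq_2)
  have e2: "U n p q (2*Suc i+1) = int n * U n p q (2*Suc i) - U n p q (2*i+1)"
    by (simp add: numeral_2_eq_2)
  show ?case using Suc e1 e2 by (simp add: Phi_def power2_eq_square algebra_simps)
qed

lemma U_lin: "U n p q (Suc k) = p * A n (Suc k) - q * A n k \<and> U n p q (Suc (Suc k)) = p * A n (Suc (Suc k)) - q * A n (Suc k)"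
proof (induction k)
  case 0 then show ?case by simp
next
  case (Suc k)
  then have h1: "U n p q (Suc k) = p * A n (Suc k) - q * A n k"
    and h2: "U n p q (Suc (Suc k)) = p * A n (Suc (Suc k)) - q * A n (Suc k)" by auto
  have "U n p q (Suc (Suc (Suc k))) = int n * U n p q (Suc (Suc k)) - U n p q (Suc k)" by simp
  also have "\<dots> = p * (int n * A n (Suc (Suc k)) - A n (Suc k)) - q * (int n * A n (Suc k) - A n k)"
    unfolding h1 h2 by (simp add: algebra_simps)
  also have "\<dots> = p * A n (Suc (Suc (Suc k))) - q * A n (Suc (Suc k))" by simp
  finally show ?case using h2 by simp
qed

lemma lin_step:
  assumes "(x3::int) = N * x2 - x1" "b3 = N * b2 - b1" "b2 = N * b1 - b0"
    "x1 = a1 * b1 - a0 * b0" "x2 = a1 * b2 - a0 * b1"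
  shows "x3 = a1 * b3 - a0 * b2"
proof -
  have "x3 = N * (a1 * b2 - a0 * b1) - (a1 * b1 - a0 * b0)" using assms by simp
  also have "\<dots> = a1 * (N * b2 - b1) - a0 * (N * b1 - b0)" by (simp add: algebra_simps)
  also have "\<dots> = a1 * b3 - a0 * b2" using assms by simp
  finally show ?thesis .
qed

lemma A_add: "A n (m+k+1) = A n (m+1) * A n (k+1) - A n m * A n k \<and> A n (m+k+2) = A n (m+1) * A n (k+2) - A n m * A n (k+1)"
proof (induction k)
  case 0 then show ?case by (simp add: numeral_2_eq_2 algebra_simps)
next
  case (Suc k)
  from Suc have h1: "A n (m+k+1) = A n (m+1) * A n (k+1) - A n m * A n k"
    and h2: "A n (m+k+2) = A n (m+1) * A n (k+2) - A n m * A n (k+1)" by auto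
  have r1: "A n (m+k+3) = int n * A n (m+k+2) - A n (m+k+1)"
    by (simp add: numeral_3_eq_3 numeral_2_eq_2)
  have r2: "A n (k+3) = int n * A n (k+2) - A n (k+1)"
    by (simp add: numeral_3_eq_3 numeral_2_eq_2)
  have r3: "A n (k+2) = int n * A n (k+1) - A n k"
    by (simp add: numeral_2_eq_2)
  have h3: "A n (m+k+3) = A n (m+1) * A n (k+3) - A n m * A n (k+2)"
    using lin_step[OF r1 r2 r3 h1 h2] .
  have e1: "m + Suc k + 1 = m+k+2" "Suc k + 1 = k+2" "m + Suc k + 2 = m+k+3" "Suc k + 2 = k + 3" by simp_all
  show ?case unfolding e1 using h2 h3 by simp
qed

lemma cassini: "A n (Suc k) ^ 2 - A n (Suc (Suc k)) * A n k = 1"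
proof (induction k)
  case 0 then show ?case by simp
next
  case (Suc k) then show ?case by (simp add: power2_eq_square algebra_simps)
qed

lemma A_mono: "n \<ge> 3 \<Longrightarrow> 0 \<le> A n k \<and> A n k < A n (Suc k)"
proof (induction k)
  case 0 then show ?case by simp
next
  case (Suc k)
  have i1: "int n * A n (Suc k) \<ge> 3 * A n (Suc k)" using Suc by (intro mult_right_mono) auto
  have i2: "0 \<le> A n k" "A n k < A n (Suc k)" using Suc by auto
  have "A n (Suc (Suc k)) = int n * A n (Suc k) - A n k" by simp
  then show ?case using i1 i2 by linarith
qed

lemma sum_odd: "(\<Sum>i<Suc r. U n p q (2*i+1)) = p * A n (Suc r)^2 - q * A n r * A n (Suc r)"
proof (induction r)
  case 0 then show ?case by simp
next
  case (Suc r)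
  have u: "U n p q (2*Suc r+1) = p * A n (2*r+3) - q * A n (2*r+2)"
  proof -
    have "2*Suc r+1 = Suc (2*r+2)" "Suc (2*r+2) = 2*r+3" by simp_all
    then show ?thesis using U_lin[of n p q "2*r+2"] by (simp only:)
  qed
  have a1: "A n (2*r+3) = A n (r+2) * A n (r+2) - A n (r+1) * A n (r+1)"
  proof -
    have "r+1+(r+1)+1 = 2*r+3" "r+1+1 = r+2" by simp_all
    then show ?thesis using A_add[of n "r+1" "r+1"] by (simp only:)
  qed
  have a2: "A n (2*r+2) = A n (r+2) * A n (r+1) - A n (r+1) * A n r"
  proof -
    have "r+1+r+1 = 2*r+2" "r+1+1 = r+2" by simp_all
    then show ?thesis using A_add[of n "r+1" "r"] by (simp only: mult.commute)
  qed
  have s: "(\<Sum>i<Suc (Suc r). U n p q (2*i+1)) = (\<Sum>i<Suc r. U n p q (2*i+1)) + U n p q (2*Suc r+1)"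
    by (simp only: sum.lessThan_Suc)
  have e: "Suc r = r + 1" "Suc (Suc r) = r + 2" by simp_all
  show ?case unfolding s Suc u a1 a2 unfolding e by (simp del: A.simps add: power2_eq_square algebra_simps)
qed

lemma sum_even: "(\<Sum>i<Suc r. U n p q (2*i)) = p * A n r * A n (Suc r) - q * (A n r^2 - 1)"
proof (induction r)
  case 0 then show ?case by simp
next
  case (Suc r)
  have u: "U n p q (2*Suc r) = p * A n (2*r+2) - q * A n (2*r+1)"
  proof -
    have "2*Suc r = Suc (2*r+1)" "Suc (2*r+1) = 2*r+2" by simp_all
    then show ?thesis using U_lin[of n p q "2*r+1"] by (simp only:)
  qed
  have a1: "A n (2*r+1) = A n (r+1) * A n (r+1) - A n r * A n r"
  proof -
    have "r+r+1 = 2*r+1" by simp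
    then show ?thesis using A_add[of n "r" "r"] by (simp only:)
  qed
  have a2: "A n (2*r+2) = A n (r+2) * A n (r+1) - A n (r+1) * A n r"
  proof -
    have "r+1+r+1 = 2*r+2" "r+1+1 = r+2" by simp_all
    then show ?thesis using A_add[of n "r+1" "r"] by (simp only: mult.commute)
  qed
  have s: "(\<Sum>i<Suc (Suc r). U n p q (2*i)) = (\<Sum>i<Suc r. U n p q (2*i)) + U n p q (2*Suc r)"
    by (simp only: sum.lessThan_Suc)
  have e: "Suc r = r + 1" "Suc (Suc r) = r + 2" by simp_all
  show ?case unfolding s Suc u a1 a2 unfolding e by (simp del: A.simps add: power2_eq_square algebra_simps)
qed

lemma dim_ql_closed: "dim_ql n (Suc r) (p,q) = (A n (Suc r) * (p * A n (Suc r) - q * A n r), p * A n r * A n (Suc r) - q * (A n r^2 - 1))"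
  unfolding dim_ql_def dim_tau_def phi_pow using sum_odd sum_even
  by (simp add: power2_eq_square algebra_simps)

lemma core1_fwd:
  fixes a0 a1 a2 N p q :: int
  assumes rec: "a2 = N*a1 - a0" and cas: "a1^2 - a2*a0 = 1" and pos: "a2 > 0"
    and eq: "a2*(p*a2 - q*a1) = p*a1*a2 - q*(a1^2-1)"
  shows "q = (p*a2 - q*a1)*(a2-a1)" "p = (p*a2 - q*a1)*(a1-a0)"
proof -
  show hq: "q = (p*a2 - q*a1)*(a2-a1)" using eq by algebra
  have "a2*p = a2*((p*a2 - q*a1)*(a1-a0))" using hq cas by algebra
  then show "p = (p*a2 - q*a1)*(a1-a0)" using pos by simp
qed

lemma core1_bwd:
  fixes a0 a1 a2 N p q b :: int
  assumes rec: "a2 = N*a1 - a0" and cas: "a1^2 - a2*a0 = 1"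
    and hp: "p = b*(a1-a0)" and hq: "q = b*(a2-a1)"
  shows "a2*(p*a2 - q*a1) = p*a1*a2 - q*(a1^2-1)" "p*a1*a2 - q*(a1^2-1) = b*a2"
  using hp hq cas by algebra+

lemma core2_fwd:
  fixes a0 a1 a2 N p q d :: int
  assumes rec: "a2 = N*a1 - a0" and cas: "a1^2 - a2*a0 = 1" and pos: "a2 > 0"
    and dd: "a2*d = N - 1 + (a1-a0)*a1" and bez: "a1*d - a0*(a1-a0) = 1"
    and eq: "a2*(p*a2 - q*a1) = (N-1)*(p*a1*a2 - q*(a1^2-1))"
  shows "p = (a1*p - a0*q)*d" "q = (a1*p - a0*q)*(a1-a0)"
proof -
  have "a2*(p*(a1-a0) - q*d) = 0" using eq rec cas dd by algebra
  then have h: "p*(a1-a0) = q*d" using pos by simp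
  show "p = (a1*p - a0*q)*d" using h bez by algebra
  show "q = (a1*p - a0*q)*(a1-a0)" using h bez by algebra
qed

lemma core2_bwd:
  fixes a0 a1 a2 N p q d b :: int
  assumes rec: "a2 = N*a1 - a0" and cas: "a1^2 - a2*a0 = 1"
    and dd: "a2*d = N - 1 + (a1-a0)*a1" and bez: "a1*d - a0*(a1-a0) = 1"
    and hp: "p = b*d" and hq: "q = b*(a1-a0)"
  shows "a2*(p*a2 - q*a1) = (N-1)*(p*a1*a2 - q*(a1^2-1))" "p*a1*a2 - q*(a1^2-1) = b*a2"
  using hp hq cas dd bez rec by algebra+

lemma pos_mult:
  fixes p q w u v :: int
  assumes "p = w*u" "q = w*v" "u > 0" "v > 0" "p \<ge> 0" "q \<ge> 0" "(p,q) \<noteq> (0,0)"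
  shows "w > 0"
proof (rule ccontr)
  assume "\<not> w > 0"
  then have "w \<le> 0" by simp
  then have "p \<le> 0" "q \<le> 0" using assms mult_nonpos_nonneg[of w u] mult_nonpos_nonneg[of w v] by auto
  then show False using assms by auto
qed
theorem proposition4p1:
  fixes n r :: nat and x :: "int \<times> int"
  assumes "n \<ge> 3" and "r \<ge> 1" and "regular_dim n x"
  shows "((\<exists>m. dim_ql n (r + 1) x = (m, m)) \<longleftrightarrow>
           (\<exists>b > 0. x = (b * B n (2 * r - 1), b * B n (2 * r + 1))))
       \<and> (\<forall>m b. dim_ql n (r + 1) x = (m, m) \<and> b > 0 \<and>
           x = (b * B n (2 * r - 1), b * B n (2 * r + 1)) \<longrightarrow> m = b * A n (r + 1))
       \<and> ((\<exists>m. dim_ql n (r + 1) x = ((int n - 1) * m, m)) \<longleftrightarrow>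
           (\<exists>b > 0. x = (if r = 1 then (b, b) else (b * B n (2 * r - 3), b * B n (2 * r - 1)))))
       \<and> (\<forall>m b. dim_ql n (r + 1) x = ((int n - 1) * m, m) \<and> b > 0 \<and>
           x = (if r = 1 then (b, b) else (b * B n (2 * r - 3), b * B n (2 * r - 1)))
           \<longrightarrow> m = b * A n (r + 1))"
proof -
  obtain p q where x: "x = (p,q)" by fastforce
  from assms(3) have nz: "(p,q) \<noteq> (0,0)" and nn: "nonneg_vec (dim_tau n 0 x)"
    unfolding regular_dim_def x by auto
  then have p0: "p \<ge> 0" and q0: "q \<ge> 0" unfolding dim_tau_def nonneg_vec_def x by auto
  obtain k where rk: "r = Suc k" using assms(2) by (cases r) auto
  define a0 where "a0 = A n k"
  define a1 where "a1 = A n (Suc k)"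
  define a2 where "a2 = A n (Suc (Suc k))"
  define N where "N = int n"
  have N3: "N \<ge> 3" using assms(1) unfolding N_def by simp
  have rec: "a2 = N*a1 - a0" unfolding a0_def a1_def a2_def N_def by simp
  have cas: "a1^2 - a2*a0 = 1" unfolding a0_def a1_def a2_def by (rule cassini)
  have m0: "0 \<le> a0" "a0 < a1" using A_mono[OF assms(1), of k] unfolding a0_def a1_def by auto
  have m1: "a1 < a2" using A_mono[OF assms(1), of "Suc k"] unfolding a1_def a2_def by auto
  have a2pos: "a2 > 0" using m0 m1 by simp
  have dq: "dim_ql n (r+1) x = (a2*(p*a2 - q*a1), p*a1*a2 - q*(a1^2-1))"
    using dim_ql_closed[of n "Suc k" p q] unfolding x rk a0_def a1_def a2_def
    by (simp add: algebra_simps)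
  have B1: "B n (2*r-1) = a1 - a0" unfolding rk B_def a0_def a1_def by simp
  have B2: "B n (2*r+1) = a2 - a1" unfolding rk B_def a1_def a2_def by simp
  define d where "d = (if r = 1 then 1 else B n (2*r-3))"
  have dfacts: "d > 0 \<and> a2*d = N - 1 + (a1-a0)*a1 \<and> a1*d - a0*(a1-a0) = 1"
  proof (cases k)
    case 0
    then show ?thesis unfolding d_def rk a0_def a1_def a2_def N_def by simp
  next
    case (Suc j)
    define c where "c = A n j"
    have d: "d = a0 - c" unfolding d_def rk Suc B_def a0_def c_def by simp
    have rec0: "a1 = N*a0 - c" unfolding a0_def a1_def c_def N_def Suc by simp
    have cas0: "a0^2 - a1*c = 1" unfolding a0_def a1_def c_def Suc by (rule cassini)
    have "c < a0" using A_mono[OF assms(1), of j] unfolding a0_def c_def Suc by auto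
    moreover have "a2*d = N - 1 + (a1-a0)*a1" unfolding d using rec rec0 cas cas0 by algebra
    moreover have "a1*d - a0*(a1-a0) = 1" unfolding d using rec rec0 cas cas0 by algebra
    ultimately show ?thesis unfolding d by simp
  qed
  have ifeq: "\<And>b. (if r = 1 then (b, b) else (b * B n (2 * r - 3), b * B n (2 * r - 1)))
      = (b*d, b*(a1-a0))"
  proof -
    have "r = 1 \<Longrightarrow> a1 - a0 = 1" unfolding rk a0_def a1_def by simp
    then show "\<And>b. ?thesis b" using B1 unfolding d_def by auto
  qed
  have P1: "(\<exists>m. dim_ql n (r + 1) x = (m, m)) \<longleftrightarrow>
           (\<exists>b > 0. x = (b * B n (2 * r - 1), b * B n (2 * r + 1)))"
  proof
    assume "\<exists>m. dim_ql n (r + 1) x = (m, m)"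
    then have eq: "a2*(p*a2 - q*a1) = p*a1*a2 - q*(a1^2-1)" unfolding dq by auto
    note h = core1_fwd[OF rec cas a2pos eq]
    have "p*a2 - q*a1 > 0" using pos_mult[OF h(2) h(1)] m0 m1 p0 q0 nz by simp
    then show "\<exists>b > 0. x = (b * B n (2 * r - 1), b * B n (2 * r + 1))"
      unfolding B1 B2 x using h by (intro exI[of _ "p*a2 - q*a1"]) (auto simp: mult.commute)
  next
    assume "\<exists>b > 0. x = (b * B n (2 * r - 1), b * B n (2 * r + 1))"
    then obtain b where "p = b*(a1-a0)" "q = b*(a2-a1)" unfolding B1 B2 x by auto
    note h = core1_bwd[OF rec cas this]
    show "\<exists>m. dim_ql n (r + 1) x = (m, m)" unfolding dq using h(1) by auto
  qed
  have P2: "\<forall>m b. dim_ql n (r + 1) x = (m, m) \<and> b > 0 \<and>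
           x = (b * B n (2 * r - 1), b * B n (2 * r + 1)) \<longrightarrow> m = b * A n (r + 1)"
  proof (intro allI impI)
    fix m b
    assume a: "dim_ql n (r + 1) x = (m, m) \<and> b > 0 \<and> x = (b * B n (2 * r - 1), b * B n (2 * r + 1))"
    then have "p = b*(a1-a0)" "q = b*(a2-a1)" unfolding B1 B2 x by auto
    note h = core1_bwd[OF rec cas this]
    have "m = p*a1*a2 - q*(a1^2-1)" using a unfolding dq by auto
    then show "m = b * A n (r + 1)" using h(2) unfolding rk a2_def by simp
  qed
  have P3: "(\<exists>m. dim_ql n (r + 1) x = ((int n - 1) * m, m)) \<longleftrightarrow>
           (\<exists>b > 0. x = (if r = 1 then (b, b) else (b * B n (2 * r - 3), b * B n (2 * r - 1))))"
    unfolding ifeq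
  proof
    assume "\<exists>m. dim_ql n (r + 1) x = ((int n - 1) * m, m)"
    then have eq: "a2*(p*a2 - q*a1) = (N-1)*(p*a1*a2 - q*(a1^2-1))" unfolding dq N_def by auto
    note h = core2_fwd[OF rec cas a2pos _ _ eq]
    have h': "p = (a1*p - a0*q)*d" "q = (a1*p - a0*q)*(a1-a0)" using h dfacts by auto
    have "a1*p - a0*q > 0" using pos_mult[OF h'] m0 dfacts p0 q0 nz by simp
    then show "\<exists>b > 0. x = (b*d, b*(a1-a0))"
      unfolding x using h' by (intro exI[of _ "a1*p - a0*q"]) (auto simp: mult.commute)
  next
    assume "\<exists>b > 0. x = (b*d, b*(a1-a0))"
    then obtain b where "p = b*d" "q = b*(a1-a0)" unfolding x by auto
    note h = core2_bwd[OF rec cas _ _ this]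
    have "a2*(p*a2 - q*a1) = (N-1)*(p*a1*a2 - q*(a1^2-1))" using h dfacts by auto
    then show "\<exists>m. dim_ql n (r + 1) x = ((int n - 1) * m, m)" unfolding dq N_def by auto
  qed
  have P4: "\<forall>m b. dim_ql n (r + 1) x = ((int n - 1) * m, m) \<and> b > 0 \<and>
           x = (if r = 1 then (b, b) else (b * B n (2 * r - 3), b * B n (2 * r - 1)))
           \<longrightarrow> m = b * A n (r + 1)"
    unfolding ifeq
  proof (intro allI impI)
    fix m b
    assume a: "dim_ql n (r + 1) x = ((int n - 1) * m, m) \<and> b > 0 \<and> x = (b*d, b*(a1-a0))"
    then have "p = b*d" "q = b*(a1-a0)" unfolding x by auto
    note h = core2_bwd[OF rec cas _ _ this]
    have "m = p*a1*a2 - q*(a1^2-1)" using a unfolding dq by auto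
    then show "m = b * A n (r + 1)" using h(2) dfacts unfolding rk a2_def by simp
  qed
  show ?thesis using P1 P2 P3 P4 by blast
qed

end
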